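(* Let $L$ be a positive definite even lattice with dual lattice $L^\circ$, and let $\sigma$ be an isometry of $L$ of order $p\ge 2$ which is fixed-point-free on $L$ (extended $\mathbb{Q}$-linearly to $L^\circ$). Let $s=p$ if $p$ is even and $s=2p$ if $p$ is odd, and let $c^\sigma: L\times L\to \mathbb{Z}_s$ be defined by $$c^\sigma(\alpha,\beta)=\frac{s}{p}\sum_{i=1}^{p-1}\langle i\sigma^i(\alpha),\beta\rangle + s\mathbb{Z}.$$ Let $R_L^\sigma=\{\alpha\in L \mid c^\sigma(\alpha,\beta)=0 \text{ for all }\beta\in L\}$. Then $$R_L^\sigma=\big((1-\sigma)L^\circ\big)\cap L.$$
   Context: $L^\circ=\{\alpha\in\mathbb{Q}\otimes_{\mathbb{Z}}L \mid \langle\alpha,L\rangle\subset\mathbb{Z}\}$. "Fixed-point-free" means $\sigma$ fixes no nonzero element of $L$. *)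

theory Defs
  imports "HOL-Analysis.Analysis"
begin

text \<open>A lattice of rank CARD('n) is modelled as the standard lattice of integer
vectors inside the rational space rat^'n (= Q tensor L), with the bilinear form
given by a Gram matrix G.\<close>

definition lat :: "(rat^'n) set" where
  "lat = {x. \<forall>i. x $ i \<in> \<int>}"

definition bil :: "rat^'n^'n \<Rightarrow> rat^'n \<Rightarrow> rat^'n \<Rightarrow> rat" where
  "bil G x y = (\<Sum>i\<in>UNIV. \<Sum>j\<in>UNIV. x $ i * G $ i $ j * y $ j)"

definition dual_lat :: "rat^'n^'n \<Rightarrow> (rat^'n) set" where
  "dual_lat G = {a. \<forall>b\<in>lat. bil G a b \<in> \<int>}"

definition pos_def_even_lattice :: "rat^'n^'n \<Rightarrow> bool" where
  "pos_def_even_lattice G \<longleftrightarrow>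
     (\<forall>i j. G $ i $ j = G $ j $ i) \<and>
     (\<forall>x\<in>lat. \<forall>y\<in>lat. bil G x y \<in> \<int>) \<and>
     (\<forall>x\<in>lat. \<exists>k::int. bil G x x = 2 * of_int k) \<and>
     (\<forall>x\<in>lat. x \<noteq> 0 \<longrightarrow> bil G x x > 0)"

definition lattice_isometry :: "rat^'n^'n \<Rightarrow> rat^'n^'n \<Rightarrow> bool" where
  "lattice_isometry G S \<longleftrightarrow>
     (\<lambda>x. S *v x) ` lat = lat \<and>
     (\<forall>x\<in>lat. \<forall>y\<in>lat. bil G (S *v x) (S *v y) = bil G x y)"

definition has_order :: "rat^'n^'n \<Rightarrow> nat \<Rightarrow> bool" where
  "has_order S p \<longleftrightarrow> 0 < p \<and> ((\<lambda>x. S *v x) ^^ p) = id \<and>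
     (\<forall>k. 0 < k \<and> k < p \<longrightarrow> ((\<lambda>x. S *v x) ^^ k) \<noteq> id)"

definition fixed_point_free :: "rat^'n^'n \<Rightarrow> bool" where
  "fixed_point_free S \<longleftrightarrow> (\<forall>x\<in>lat. S *v x = x \<longrightarrow> x = 0)"

definition s_param :: "nat \<Rightarrow> nat" where
  "s_param p = (if even p then p else 2 * p)"

text \<open>The integer representative (s/p) * sum_{i=1}^{p-1} <i sigma^i(a), b>;
c^sigma(a,b) is its class modulo s.\<close>
definition c_rep :: "rat^'n^'n \<Rightarrow> rat^'n^'n \<Rightarrow> nat \<Rightarrow> rat^'n \<Rightarrow> rat^'n \<Rightarrow> rat" where
  "c_rep G S p a b = (of_nat (s_param p) / of_nat p) *
      (\<Sum>i\<in>{1..p-1}. bil G (of_nat i *s ((\<lambda>x. S *v x) ^^ i) a) b)"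

definition R_sigma :: "rat^'n^'n \<Rightarrow> rat^'n^'n \<Rightarrow> nat \<Rightarrow> (rat^'n) set" where
  "R_sigma G S p = {a\<in>lat. \<forall>b\<in>lat. \<exists>k::int. c_rep G S p a b = of_int (int (s_param p) * k)}"

end

theory Submission imports Defs begin
lemma mv_add: "(S::rat^'n^'n) *v (x + y) = S *v x + S *v y"
  by (simp add: matrix_vector_mult_def vec_eq_iff algebra_simps sum.distrib)
lemma mv_diff: "(S::rat^'n^'n) *v (x - y) = S *v x - S *v y"
  by (simp add: matrix_vector_mult_def vec_eq_iff algebra_simps sum_subtractf)
lemma mv_scale: "(S::rat^'n^'n) *v (c *s x) = c *s (S *v x)"
  by (simp add: matrix_vector_mult_def vec_eq_iff algebra_simps sum_distrib_left)
lemma mv_neg: "(S::rat^'n^'n) *v (- x) = - (S *v x)"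
  by (simp add: matrix_vector_mult_def vec_eq_iff sum_negf)
lemma bil_alt: "bil G x b = (\<Sum>i\<in>UNIV. x $ i * (\<Sum>j\<in>UNIV. G $ i $ j * b $ j))"
  unfolding bil_def by (simp add: sum_distrib_left mult.assoc)
lemma bil_add: "bil G (x + y) b = bil G x b + bil G y b"
  by (simp add: bil_alt algebra_simps sum.distrib)
lemma bil_diff: "bil G (x - y) b = bil G x b - bil G y b"
  by (simp add: bil_alt algebra_simps sum_subtractf)
lemma bil_scale: "bil G (c *s x) b = c * bil G x b"
  by (simp add: bil_alt sum_distrib_left mult.assoc)
lemma bil_neg: "bil G (- x) b = - bil G x b"
  by (simp add: bil_alt sum_negf)
lemma bil_zero: "bil G 0 b = 0"
  by (simp add: bil_alt)
lemma bil_sum: "finite A \<Longrightarrow> bil G (sum h A) b = (\<Sum>i\<in>A. bil G (h i) b)"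
  by (induction A rule: finite_induct) (auto simp: bil_zero bil_add)
lemma fp_add: "((\<lambda>x. (S::rat^'n^'n) *v x) ^^ k) (x + y) = ((\<lambda>x. S *v x) ^^ k) x + ((\<lambda>x. S *v x) ^^ k) y"
  by (induction k) (auto simp: mv_add)
lemma fp_diff: "((\<lambda>x. (S::rat^'n^'n) *v x) ^^ k) (x - y) = ((\<lambda>x. S *v x) ^^ k) x - ((\<lambda>x. S *v x) ^^ k) y"
  by (induction k) (auto simp: mv_diff)
lemma fp_scale: "((\<lambda>x. (S::rat^'n^'n) *v x) ^^ k) (c *s x) = c *s ((\<lambda>x. S *v x) ^^ k) x"
  by (induction k) (auto simp: mv_scale)
lemma mv_sum: "finite A \<Longrightarrow> (S::rat^'n^'n) *v (sum h A) = (\<Sum>i\<in>A. S *v h i)"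
  by (induction A rule: finite_induct) (auto simp: mv_add)

lemma scale_int: "\<exists>m::int. m > 0 \<and> (of_int m *s (y::rat^'n)) \<in> lat"
proof -
  define m where "m = (\<Prod>i\<in>UNIV. snd (quotient_of (y $ i)))"
  have pos: "\<And>i. snd (quotient_of (y $ i)) > 0" using quotient_of_denom_pos' by blast
  have "m > 0" unfolding m_def using pos by (simp add: prod_pos)
  moreover have "of_int m * y $ i \<in> \<int>" for i
  proof -
    obtain a b where ab: "quotient_of (y $ i) = (a, b)" by fastforce
    have yi: "y $ i = of_int a / of_int b" using quotient_of_div[OF ab] .
    have b0: "b > 0" using pos[of i] ab by simp
    have "b dvd m" unfolding m_def
      by (rule dvd_prod_eqI[of UNIV i]) (use ab in auto)
    then obtain k where k: "m = b * k" by blast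
    have bq: "(of_int b :: rat) \<noteq> 0" using b0 by simp
    have "of_int m * y $ i = of_int k * (of_int b * (of_int a / of_int b))" by (simp add: yi k)
    also have "\<dots> = of_int (k * a)" using bq by simp
    finally have "of_int m * y $ i = of_int (k * a)" .
    thus ?thesis by simp
  qed
  ultimately show ?thesis unfolding lat_def by auto
qed

lemma telesc: "(\<Sum>i\<in>{1..n}. of_nat i *s (g i - g (Suc i))) = (\<Sum>i\<in>{1..n}. g i) - of_nat n *s (g (Suc n) :: rat^'n)"
proof (induction n)
  case 0 then show ?case by simp
next
  case (Suc n)
  have "(\<Sum>i\<in>{1..Suc n}. of_nat i *s (g i - g (Suc i))) = (\<Sum>i\<in>{1..n}. of_nat i *s (g i - g (Suc i))) + of_nat (Suc n) *s (g (Suc n) - g (Suc (Suc n)))"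
    by simp
  also have "\<dots> = (\<Sum>i\<in>{1..n}. g i) - of_nat n *s g (Suc n) + of_nat (Suc n) *s (g (Suc n) - g (Suc (Suc n)))"
    using Suc by simp
  also have "\<dots> = (\<Sum>i\<in>{1..Suc n}. g i) - of_nat (Suc n) *s g (Suc (Suc n))"
    by (simp add: vector_ssub_ldistrib vector_sadd_rdistrib algebra_simps)
  finally show ?case .
qed
theorem mainTheorem1:
  fixes G S :: "rat^'n^'n" and p :: nat
  assumes "pos_def_even_lattice G"
    and "lattice_isometry G S"
    and "has_order S p" and "p \<ge> 2"
    and "fixed_point_free S"
  shows "R_sigma G S p = {a - S *v a | a. a \<in> dual_lat G} \<inter> lat"
proof -
  define f where "f = (\<lambda>x. S *v x)"
  define N where "N x = (\<Sum>i\<in>{1..p-1}. of_nat i *s (f ^^ i) x)" for x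
  have fp: "f ^^ p = id" using assms(3) unfolding has_order_def f_def by blast
  have latc: "x \<in> lat \<Longrightarrow> f x \<in> lat" for x using assms(2) unfolding lattice_isometry_def f_def by blast
  have fpfQ: "f y = y \<Longrightarrow> y = 0" for y
  proof -
    assume fy: "f y = y"
    obtain m :: int where m: "m > 0" "of_int m *s y \<in> lat" using scale_int by blast
    have "S *v (of_int m *s y) = of_int m *s y" using fy by (simp add: mv_scale f_def)
    hence "of_int m *s y = 0" using m assms(5) unfolding fixed_point_free_def by blast
    thus "y = 0" using m(1) by (simp add: vec_eq_iff)
  qed
  have fpS: "(f ^^ i) (f x) = (f ^^ Suc i) x" for i x by (simp add: funpow_swap1)
  have sum0: "(\<Sum>i<p. (f ^^ i) x) = 0" for x
  proof -
    let ?g = "\<lambda>i. (f ^^ i) x"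
    have "f (\<Sum>i<p. ?g i) = (\<Sum>i<p. ?g (Suc i))" unfolding f_def by (simp add: mv_sum)
    also have "\<dots> = (\<Sum>i<p. ?g i)"
    proof -
      have "(\<Sum>i<p. ?g (Suc i)) + ?g 0 = (\<Sum>i<Suc p. ?g i)" by (subst sum.lessThan_Suc_shift) simp
      also have "\<dots> = (\<Sum>i<p. ?g i) + ?g p" by simp
      finally show ?thesis using fp by simp
    qed
    finally show ?thesis using fpfQ by blast
  qed
  have key: "N (x - f x) = - (of_nat p *s x)" for x
  proof -
    let ?g = "\<lambda>i. (f ^^ i) x"
    have "N (x - f x) = (\<Sum>i\<in>{1..p-1}. of_nat i *s (?g i - ?g (Suc i)))"
      unfolding N_def f_def by (simp add: fp_diff funpow_swap1)
    also have "\<dots> = (\<Sum>i\<in>{1..p-1}. ?g i) - of_nat (p-1) *s ?g p"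
      using telesc[where n="p-1" and g="?g"] assms(4) by simp
    also have "(\<Sum>i\<in>{1..p-1}. ?g i) = - x"
    proof -
      have "(\<Sum>i<p. ?g i) = (\<Sum>i\<in>{0..p-1}. ?g i)"
        using assms(4) by (intro sum.cong) auto
      also have "\<dots> = ?g 0 + (\<Sum>i\<in>{1..p-1}. ?g i)" by (simp add: sum.atLeast_Suc_atMost)
      finally show ?thesis using sum0[of x] by (simp add: add_eq_0_iff)
    qed
    also have "?g p = x" using fp by simp
    finally show ?thesis using assms(4) by (simp add: vec_eq_iff of_nat_diff algebra_simps)
  qed
  have Nlin: "N (x - f x) = N x - N (f x)" for x
    unfolding N_def f_def by (simp add: fp_diff vector_ssub_ldistrib sum_subtractf)
  have Ncomm: "N (f x) = f (N x)" for x
    unfolding N_def by (simp add: f_def mv_sum mv_scale funpow_swap1)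
  have crep: "c_rep G S p a b = of_nat (s_param p) / of_nat p * bil G (N a) b" for a b
    unfolding c_rep_def N_def f_def by (simp add: bil_sum)
  define sp where "sp = (of_nat (s_param p) :: rat)"
  have sp0: "sp \<noteq> 0" unfolding sp_def s_param_def using assms(4) by auto
  have p0: "(of_nat p :: rat) \<noteq> 0" using assms(4) by simp
  show ?thesis
  proof (intro set_eqI iffI)
    fix a assume aR: "a \<in> R_sigma G S p"
    hence alat: "a \<in> lat" unfolding R_sigma_def by blast
    define d where "d = (- 1 / of_nat p) *s N a"
    have "d - f d = (- 1 / of_nat p) *s (N a - f (N a))"
      unfolding d_def f_def by (simp add: mv_scale mv_neg vector_ssub_ldistrib)
    also have "N a - f (N a) = - (of_nat p *s a)" using key[of a] Nlin[of a] Ncomm[of a] by simp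
    finally have da: "d - f d = a" using p0 by (simp add: vec_eq_iff)
    have "d \<in> dual_lat G" unfolding dual_lat_def
    proof (intro CollectI ballI)
      fix b :: "rat^'n" assume b: "b \<in> lat"
      then obtain k :: int where k: "c_rep G S p a b = of_int (int (s_param p) * k)"
        using aR unfolding R_sigma_def by blast
      hence "sp / of_nat p * bil G (N a) b = sp * of_int k" by (simp add: crep sp_def)
      hence "bil G (N a) b = of_nat p * of_int k" using sp0 p0 by (simp add: field_simps)
      hence "bil G d b = - of_int k" unfolding d_def using p0 by (simp add: bil_scale bil_neg)
      thus "bil G d b \<in> \<int>" by simp
    qed
    thus "a \<in> {a - S *v a | a. a \<in> dual_lat G} \<inter> lat" using da alat unfolding f_def by blast
  next
    fix a assume "a \<in> {a - S *v a | a. a \<in> dual_lat G} \<inter> lat"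
    then obtain d where d: "d \<in> dual_lat G" "a = d - f d" and alat: "a \<in> lat" unfolding f_def by blast
    have Na: "N a = - (of_nat p *s d)" using key d(2) by simp
    show "a \<in> R_sigma G S p" unfolding R_sigma_def
    proof (intro CollectI conjI alat ballI)
      fix b :: "rat^'n" assume b: "b \<in> lat"
      have "bil G d b \<in> \<int>" using d(1) b unfolding dual_lat_def by blast
      then obtain k :: int where k: "bil G d b = of_int k" by (auto elim!: Ints_cases)
      have "c_rep G S p a b = sp / of_nat p * (- (of_nat p * of_int k))"
        unfolding crep sp_def Na using k by (simp add: bil_scale bil_neg)
      also have "\<dots> = of_int (int (s_param p) * (-k))" using p0 by (simp add: sp_def)
      finally show "\<exists>k::int. c_rep G S p a b = of_int (int (s_param p) * k)" by blast
    qed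
  qed
qed

end
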